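(* Let $R_1>1$ be an odd integer, $R_2>1$ an odd squarefree integer with $\gcd(R_1,R_2)=1$, $N=R_1R_2$, and let $\chi(n)=\left(\frac{n}{R_1R_2}\right)$ be the Jacobi symbol. Then the $R_1\times R_2$ finite Zak transform of $\chi$ is $$X_{R_2}(j,k)=c_{R_2}\left(\frac{R_1}{R_2}\right)e^{-2\pi i\frac{R_1^{-1}jk}{R_2}}\left(\frac{j}{R_2}\right)\left(\frac{k}{R_1}\right),\qquad 0\le j<R_2,\ 0\le k<R_1,$$ where $R_1^{-1}$ is the inverse of $R_1$ modulo $R_2$ and $c_{R_2}=\sum_{b=0}^{R_2-1}\left(\frac{b}{R_2}\right)e^{2\pi i b/R_2}$.
   Context: $\left(\frac{a}{M}\right)$ denotes the Jacobi symbol for odd positive $M$ (zero when $\gcd(a,M)>1$). For $N=LM$ and an $N$-periodic sequence $x$, the finite Zak transform is $X_L(j,k)=\sum_{r=0}^{L-1}x(k+rM)e^{2\pi i rj/L}$, $0\le j<L$, $0\le k<M$; here $L=R_2$, $M=R_1$. *)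

theory Defs
  imports "HOL-Analysis.Analysis" "HOL-Number_Theory.Number_Theory" "HOL-Computational_Algebra.Squarefree"
begin

definition jacobi :: "int \<Rightarrow> int \<Rightarrow> int" where
  "jacobi a M = (\<Prod>p\<in>prime_factors M. Legendre a p ^ multiplicity p M)"

definition zak :: "(int \<Rightarrow> complex) \<Rightarrow> int \<Rightarrow> int \<Rightarrow> int \<Rightarrow> int \<Rightarrow> complex" where
  "zak x L M j k = (\<Sum>r\<in>{0..<L}. x (k + r * M) * exp (2 * pi * \<i> * of_int (r * j) / of_int L))"

definition inv_mod :: "int \<Rightarrow> int \<Rightarrow> int" where
  "inv_mod a m = (SOME u. [a * u = 1] (mod m))"

definition gauss_c :: "int \<Rightarrow> complex" where
  "gauss_c L = (\<Sum>b\<in>{0..<L}. of_int (jacobi b L) * exp (2 * pi * \<i> * of_int b / of_int L))"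

end

theory Submission
  imports Defs
begin


lemma Legendre_cong:
  assumes "[a = b] (mod p)" shows "Legendre a p = Legendre b p"
  using assms unfolding Legendre_def QuadRes_def
  by (smt (verit, ccfv_SIG) cong_sym cong_trans)

lemma small_cong_eq:
  fixes x y p :: int
  assumes "x \<in> {-1,0,1}" "y \<in> {-1,0,1}" "[x = y] (mod p)" "p > 2"
  shows "x = y"
proof -
  have "p dvd (x - y)" using assms(3) by (simp add: cong_iff_dvd_diff)
  moreover have "\<bar>x - y\<bar> < p" using assms by auto
  ultimately show ?thesis
  proof (cases "x - y = 0")
    case False
    hence "\<bar>p\<bar> \<le> \<bar>x - y\<bar>" by (rule dvd_imp_le_int) fact
    thus ?thesis using \<open>\<bar>x - y\<bar> < p\<close> assms(4) by simp
  qed simp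
qed

lemma Legendre_vals: "Legendre a p \<in> {-1,0,1}"
  unfolding Legendre_def by auto

lemma Legendre_mult_nat:
  assumes "prime p" "p > 2"
  shows "Legendre (a*b) (int p) = Legendre a (int p) * Legendre b (int p)"
proof -
  have "[Legendre (a*b) (int p) = (a*b) ^ ((p - 1) div 2)] (mod p)" using euler_criterion assms by blast
  moreover have "[Legendre a p * Legendre b p = a ^ ((p - 1) div 2) * b ^ ((p - 1) div 2)] (mod p)"
    using euler_criterion assms cong_mult by blast
  ultimately have c: "[Legendre (a*b) p = Legendre a p * Legendre b p] (mod p)"
    by (metis cong_sym cong_trans power_mult_distrib)
  have v: "Legendre a p * Legendre b p \<in> {-1,0,1}" using Legendre_vals[of a p] Legendre_vals[of b p] by auto
  have "int p > 2" using assms by simp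
  from small_cong_eq[OF Legendre_vals v c this] show ?thesis .
qed

lemma Legendre_mult:
  fixes p :: int
  assumes "prime p" "p > 2"
  shows "Legendre (a*b) p = Legendre a p * Legendre b p"
proof -
  have "prime (nat p)" using assms(1) prime_int_nat_transfer by blast
  moreover have "nat p > 2" using assms(2) by linarith
  ultimately have "Legendre (a*b) (int (nat p)) = Legendre a (int (nat p)) * Legendre b (int (nat p))"
    by (rule Legendre_mult_nat)
  moreover have "int (nat p) = p" using assms(2) by linarith
  ultimately show ?thesis by simp
qed


lemma prime_factor_gt2:
  fixes M p :: int
  assumes "p \<in> prime_factors M" "odd M"
  shows "prime p" "p > 2"
proof -
  show pp: "prime p" using assms(1) by blast
  have "p dvd M" using assms(1) by blast
  hence "p \<noteq> 2" using assms(2) by auto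
  moreover have "p \<ge> 2" using pp prime_ge_2_int by blast
  ultimately show "p > 2" by simp
qed

lemma jacobi_cong:
  assumes "[a = b] (mod M)" shows "jacobi a M = jacobi b M"
  unfolding jacobi_def
proof (rule prod.cong[OF refl])
  fix p assume "p \<in> prime_factors M"
  hence "p dvd M" by blast
  hence "[a = b] (mod p)" using assms cong_dvd_modulus by blast
  thus "Legendre a p ^ multiplicity p M = Legendre b p ^ multiplicity p M"
    using Legendre_cong by simp
qed

lemma jacobi_mult:
  assumes "odd M" shows "jacobi (a*b) M = jacobi a M * jacobi b M"
  unfolding jacobi_def prod.distrib[symmetric]
proof (rule prod.cong[OF refl])
  fix p assume p: "p \<in> prime_factors M"
  have "Legendre (a*b) p = Legendre a p * Legendre b p"
    using Legendre_mult prime_factor_gt2[OF p assms] by blast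
  thus "Legendre (a*b) p ^ multiplicity p M = Legendre a p ^ multiplicity p M * Legendre b p ^ multiplicity p M"
    by (simp add: power_mult_distrib)
qed

lemma jacobi_one:
  shows "jacobi 1 M = 1"
  unfolding jacobi_def
proof (rule prod.neutral, rule ballI)
  fix p assume p: "p \<in> prime_factors M"
  hence pp: "prime p" by blast
  have "\<not> [1 = 0] (mod p)" using pp not_prime_unit by (auto simp: cong_0_iff)
  moreover have "QuadRes p 1" unfolding QuadRes_def by (rule exI[of _ 1]) simp
  ultimately show "Legendre 1 p ^ multiplicity p M = 1" unfolding Legendre_def by simp
qed

lemma jacobi_zero:
  fixes p :: int
  assumes "prime p" "p dvd a" "p dvd M" "M \<noteq> 0"
  shows "jacobi a M = 0"
proof -
  have pin: "p \<in> prime_factors M" using assms by (simp add: in_prime_factors_iff)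
  have "\<not> is_unit p" using assms(1) not_prime_unit by blast
  hence "multiplicity p M > 0" using multiplicity_gt_zero_iff[OF assms(4)] assms(3) by blast
  moreover have "Legendre a p = 0" unfolding Legendre_def using assms(2) by (simp add: cong_0_iff)
  ultimately have "Legendre a p ^ multiplicity p M = 0" by simp
  thus ?thesis unfolding jacobi_def using pin by (simp add: prod_zero_iff) blast
qed

lemma jacobi_modmult:
  fixes M1 M2 :: int
  assumes "M1 \<noteq> 0" "M2 \<noteq> 0" "coprime M1 M2"
  shows "jacobi a (M1*M2) = jacobi a M1 * jacobi a M2"
proof -
  have disj: "prime_factors M1 \<inter> prime_factors M2 = {}"
  proof (rule ccontr)
    assume "prime_factors M1 \<inter> prime_factors M2 \<noteq> {}"
    then obtain p where "p \<in> prime_factors M1" "p \<in> prime_factors M2" by blast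
    hence "prime p" "p dvd M1" "p dvd M2" by auto
    thus False using assms(3) by (meson coprime_common_divisor not_prime_unit)
  qed
  have m1: "multiplicity p (M1*M2) = multiplicity p M1" if "p \<in> prime_factors M1" for p
  proof -
    have "prime p" "p dvd M1" using that by auto
    hence "\<not> p dvd M2" using assms(3) by (meson coprime_common_divisor not_prime_unit)
    hence "multiplicity p M2 = 0" by (rule not_dvd_imp_multiplicity_0)
    thus ?thesis using prime_elem_multiplicity_mult_distrib[OF prime_imp_prime_elem[OF \<open>prime p\<close>] assms(1,2)] by simp
  qed
  have m2: "multiplicity p (M1*M2) = multiplicity p M2" if "p \<in> prime_factors M2" for p
  proof -
    have "prime p" "p dvd M2" using that by auto
    hence "\<not> p dvd M1" using assms(3) by (meson coprime_common_divisor not_prime_unit)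
    hence "multiplicity p M1 = 0" by (rule not_dvd_imp_multiplicity_0)
    thus ?thesis using prime_elem_multiplicity_mult_distrib[OF prime_imp_prime_elem[OF \<open>prime p\<close>] assms(1,2)] by simp
  qed
  have "jacobi a (M1*M2) = (\<Prod>p\<in>prime_factors M1 \<union> prime_factors M2. Legendre a p ^ multiplicity p (M1*M2))"
    unfolding jacobi_def using prime_factors_product[OF assms(1,2)] by simp
  also have "\<dots> = (\<Prod>p\<in>prime_factors M1. Legendre a p ^ multiplicity p (M1*M2)) * (\<Prod>p\<in>prime_factors M2. Legendre a p ^ multiplicity p (M1*M2))"
    by (rule prod.union_disjoint) (use disj in auto)
  also have "\<dots> = jacobi a M1 * jacobi a M2"
    unfolding jacobi_def using m1 m2 by simp
  finally show ?thesis .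
qed


definition ee :: "int \<Rightarrow> int \<Rightarrow> complex" where
  "ee L x = exp (2 * pi * \<i> * of_int x / of_int L)"

lemma ee_add: "ee L (x + y) = ee L x * ee L y"
  unfolding ee_def by (simp add: exp_add[symmetric] add_divide_distrib distrib_left)

lemma ee_mult_L: assumes "L \<noteq> 0" shows "ee L (L * t) = 1"
proof -
  have "2 * pi * \<i> * of_int (L * t) / of_int L = (2 * of_int t * pi) * \<i>"
    using assms by (simp add: field_simps)
  thus ?thesis unfolding ee_def using exp_integer_2pi[of "of_int t"] by simp
qed

lemma ee_cong: assumes "L \<noteq> 0" "[x = y] (mod L)" shows "ee L x = ee L y"
proof -
  obtain t where "x = y + L * t" using assms(2)
    by (metis cong_iff_lin cong_sym)
  thus ?thesis using ee_add ee_mult_L[OF assms(1)] by simp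
qed

lemma ee_mod: assumes "L \<noteq> 0" shows "ee L x = ee L (x mod L)"
proof -
  have "[x = x mod L] (mod L)" by (simp add: cong_def)
  thus ?thesis by (rule ee_cong[OF assms])
qed

lemma sum_reindex_affine:
  fixes L u k :: int and f :: "int \<Rightarrow> 'a::comm_monoid_add"
  assumes "L > 0" "coprime u L" "\<And>x. f x = f (x mod L)"
  shows "(\<Sum>r\<in>{0..<L}. f (k + r*u)) = (\<Sum>b\<in>{0..<L}. f b)"
proof -
  define h where "h r = (k + r*u) mod L" for r
  have inj: "inj_on h {0..<L}"
  proof (rule inj_onI)
    fix r s assume r: "r \<in> {0..<L}" and s: "s \<in> {0..<L}" and eq: "h r = h s"
    hence "[k + r*u = k + s*u] (mod L)" unfolding h_def cong_def by simp
    hence "[r*u = s*u] (mod L)" by (metis cong_add_lcancel)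
    hence "[r = s] (mod L)" using cong_mult_rcancel[OF assms(2)] by blast
    thus "r = s" using r s cong_less_imp_eq_int by auto
  qed
  have sub: "h ` {0..<L} \<subseteq> {0..<L}" unfolding h_def using assms(1) by auto
  have img: "h ` {0..<L} = {0..<L}" by (rule endo_inj_surj[OF _ sub inj]) simp
  have "(\<Sum>b\<in>{0..<L}. f b) = (\<Sum>b\<in>h ` {0..<L}. f b)" using img by simp
  also have "\<dots> = (\<Sum>r\<in>{0..<L}. f (h r))" by (rule sum.reindex_cong[OF inj refl]) simp
  also have "\<dots> = (\<Sum>r\<in>{0..<L}. f (k + r*u))" unfolding h_def using assms(3) by simp
  finally show ?thesis by simp
qed



lemma not_coprime_prime:
  fixes a L :: int
  assumes "\<not> coprime a L" "L \<noteq> 0"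
  obtains p where "prime p" "p dvd a" "p dvd L"
proof -
  obtain c where c: "c dvd a" "c dvd L" "\<not> is_unit c" using not_coprimeE assms(1) by blast
  have "c \<noteq> 0" using c(2) assms(2) by auto
  then obtain p where "p dvd c" "prime p" using prime_divisor_exists c(3) by blast
  thus ?thesis using that c dvd_trans by blast
qed

lemma jacobi_nonzero_coprime:
  fixes a L :: int
  assumes "jacobi a L \<noteq> 0" "L \<noteq> 0"
  shows "coprime a L"
proof (rule ccontr)
  assume "\<not> coprime a L"
  then obtain p where "prime p" "p dvd a" "p dvd L" using not_coprime_prime assms(2) by blast
  thus False using jacobi_zero assms by blast
qed

lemma jacobi_prime:
  fixes p :: int
  assumes "prime p" shows "jacobi a p = Legendre a p"
proof -
  have "multiplicity p p = 1" using assms by (intro multiplicity_self) (auto simp: not_prime_unit)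
  thus ?thesis unfolding jacobi_def prime_prime_factors[OF assms] by simp
qed

lemma jacobi_unit_sq:
  assumes "odd L" "[a * w = 1] (mod L)"
  shows "jacobi a L * jacobi a L = 1" "jacobi w L = jacobi a L"
proof -
  have "jacobi a L * jacobi w L = 1"
    using jacobi_mult[OF assms(1)] jacobi_cong[OF assms(2)] jacobi_one by metis
  hence "jacobi w L = jacobi a L" using zmult_eq_1_iff by auto
  thus "jacobi w L = jacobi a L" "jacobi a L * jacobi a L = 1"
    using \<open>jacobi a L * jacobi w L = 1\<close> by auto
qed

lemma nonresidue_exists:
  fixes p :: int
  assumes "prime p" "p > 2"
  shows "\<exists>g. Legendre g p = -1"
proof -
  define h where "h = (p - 1) div 2"
  define S where "S = (\<lambda>y. y^2 mod p) ` {0..h}"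
  have inS: "y^2 mod p \<in> S" for y
  proof -
    define z where "z = y mod p"
    have z: "0 \<le> z" "z < p" using assms z_def by auto
    have yz: "[y = z] (mod p)" unfolding z_def cong_def by simp
    show ?thesis
    proof (cases "z \<le> h")
      case True
      have "y^2 mod p = z^2 mod p" using cong_pow[OF yz, of 2] unfolding cong_def .
      thus ?thesis unfolding S_def using True z by auto
    next
      case False
      have "[p - z = -z] (mod p)" unfolding cong_iff_dvd_diff by simp
      hence "[(p - z)^2 = (-z)^2] (mod p)" by (rule cong_pow)
      hence c1: "[(p - z)^2 = z^2] (mod p)" by simp
      have c2: "[y^2 = z^2] (mod p)" using cong_pow[OF yz, of 2] .
      have "[(p - z)^2 = y^2] (mod p)" using cong_trans[OF c1 cong_sym[OF c2]] .
      hence "y^2 mod p = (p - z)^2 mod p" unfolding cong_def by simp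
      moreover have "p - z \<in> {0..h}"
      proof -
        have "odd p" using prime_odd_int assms by blast
        thus ?thesis using False z h_def by auto presburger
      qed
      ultimately show ?thesis unfolding S_def by auto
    qed
  qed
  have "card S \<le> card {0..h}" unfolding S_def by (rule card_image_le) simp
  also have "\<dots> = nat (h + 1)" by simp
  also have "\<dots> < nat p" using assms h_def by auto
  also have "\<dots> = card {0..<p}" by simp
  finally have "card S < card {0..<p}" .
  moreover have "finite S" unfolding S_def by simp
  ultimately have "\<not> {0..<p} \<subseteq> S"
    using card_mono[of S "{0..<p}"] by linarith
  then obtain g where g: "g \<in> {0..<p}" "g \<notin> S" by blast
  have nq: "\<not> QuadRes p g"
  proof
    assume "QuadRes p g"
    then obtain y where "[y^2 = g] (mod p)" unfolding QuadRes_def by blast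
    hence "y^2 mod p = g" using g(1) unfolding cong_def by simp
    thus False using inS[of y] g(2) by simp
  qed
  have nz: "\<not> [g = 0] (mod p)"
  proof
    assume "[g = 0] (mod p)"
    hence "g = 0" using g(1) unfolding cong_def by simp
    moreover have "0 \<in> S" unfolding S_def using h_def assms by (auto intro!: image_eqI[of _ _ 0])
    ultimately show False using g(2) by simp
  qed
  show ?thesis using nq nz unfolding Legendre_def by auto
qed



lemma gauss_sep:
  fixes L a :: int
  assumes L: "L > 1" "odd L" "squarefree L"
  shows "(\<Sum>b\<in>{0..<L}. of_int (jacobi b L) * ee L (a*b))
       = of_int (jacobi a L) * (\<Sum>b\<in>{0..<L}. of_int (jacobi b L) * ee L b)"
proof (cases "coprime a L")
  case True
  obtain w where w: "[a*w = 1] (mod L)" using cong_solve_coprime_int True by blast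
  have sq: "jacobi a L * jacobi a L = 1" using jacobi_unit_sq(1)[OF L(2) w] .
  define f where "f x = of_int (jacobi x L) * ee L x" for x
  have per: "f x = f (x mod L)" for x
  proof -
    have c: "[x = x mod L] (mod L)" by (simp add: cong_def)
    show ?thesis unfolding f_def using jacobi_cong[OF c] ee_cong[OF _ c] L(1) by simp
  qed
  have "(\<Sum>r\<in>{0..<L}. f (0 + r*a)) = (\<Sum>b\<in>{0..<L}. f b)"
    using sum_reindex_affine[where L=L and u=a and k=0 and f=f, OF _ True per] L(1) by simp
  moreover have "f (0 + r*a) = of_int (jacobi a L) * (of_int (jacobi r L) * ee L (a*r))" for r
    unfolding f_def using jacobi_mult[OF L(2), of r a] by (simp add: mult.commute)
  ultimately have eq: "(\<Sum>b\<in>{0..<L}. of_int (jacobi b L) * ee L b)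
      = of_int (jacobi a L) * (\<Sum>r\<in>{0..<L}. of_int (jacobi r L) * ee L (a*r))"
    unfolding f_def by (simp add: sum_distrib_left)
  have one: "(of_int (jacobi a L) :: complex) * of_int (jacobi a L) = 1"
    using sq by (metis of_int_1 of_int_mult)
  show ?thesis unfolding eq mult.assoc[symmetric] one by simp
next
  case False
  obtain p where p: "prime p" "p dvd a" "p dvd L" using not_coprime_prime[OF False] L(1) by auto
  have za: "jacobi a L = 0" using jacobi_zero[OF p] L(1) by simp
  obtain m where Lm: "L = p * m" using p(3) by blast
  have p0: "p > 0" using p(1) prime_gt_0_int by blast
  have m0: "m > 0" using Lm L(1) p0 by (metis less_trans zero_less_one zero_less_mult_iff not_less_iff_gr_or_eq)
  have "\<not> p dvd m"
  proof
    assume "p dvd m"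
    hence "p^2 dvd L" using Lm by (simp add: power2_eq_square)
    hence "p dvd 1" using L(3) unfolding squarefree_def by blast
    thus False using p(1) not_prime_unit by blast
  qed
  hence cop: "coprime p m" using prime_imp_coprime p(1) by blast
  have p2: "p > 2"
  proof -
    have "p \<noteq> 2" using p(3) L(2) by auto
    moreover have "p \<ge> 2" using p(1) prime_ge_2_int by blast
    ultimately show ?thesis by simp
  qed
  have modd: "odd m" using L(2) Lm by simp
  obtain g where g: "Legendre g p = -1" using nonresidue_exists[OF p(1) p2] by blast
  have "coprime m p" using cop by (simp add: ac_simps)
  then obtain y where y: "[m*y = 1] (mod p)" using cong_solve_coprime_int by blast
  define u where "u = 1 + m*(y*(g-1))"
  have "[m*y*(g-1) = 1*(g-1)] (mod p)" using cong_scalar_right[OF y] .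
  hence "[1 + m*y*(g-1) = 1 + 1*(g-1)] (mod p)" using cong_add[OF cong_refl] by blast
  hence ug: "[u = g] (mod p)" unfolding u_def by (simp add: mult.assoc)
  have u1: "[u = 1] (mod m)" unfolding u_def cong_iff_dvd_diff by simp
  have "jacobi u L = jacobi u p * jacobi u m"
    unfolding Lm by (rule jacobi_modmult) (use p0 m0 cop in auto)
  also have "jacobi u p = -1" using jacobi_prime[OF p(1)] Legendre_cong[OF ug] g by simp
  also have "jacobi u m = 1" using jacobi_cong[OF u1] jacobi_one by simp
  finally have ju: "jacobi u L = -1" by simp
  hence copu: "coprime u L" using jacobi_nonzero_coprime L(1) by auto
  obtain a' where a': "a = p * a'" using p(2) by blast
  have au: "[a*u = a] (mod L)"
    unfolding cong_iff_dvd_diff u_def a' Lm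
    by (rule dvdI[of _ _ "a' * (y*(g-1))"]) (simp add: algebra_simps)
  define f where "f x = of_int (jacobi x L) * ee L (a*x)" for x
  have per: "f x = f (x mod L)" for x
  proof -
    have c: "[x = x mod L] (mod L)" by (simp add: cong_def)
    have c2: "[a*x = a*(x mod L)] (mod L)" using cong_scalar_left[OF c] .
    show ?thesis unfolding f_def using jacobi_cong[OF c] ee_cong[OF _ c2] L(1) by simp
  qed
  have "(\<Sum>r\<in>{0..<L}. f (0 + r*u)) = (\<Sum>b\<in>{0..<L}. f b)"
    using sum_reindex_affine[where L=L and u=u and k=0 and f=f, OF _ copu per] L(1) by simp
  moreover have "f (0 + r*u) = - f r" for r
  proof -
    have "[a*u*r = a*r] (mod L)" using cong_scalar_right[OF au] .
    hence "ee L (a*(r*u)) = ee L (a*r)" using ee_cong L(1) by (simp add: ac_simps)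
    moreover have "jacobi (r*u) L = - jacobi r L" using jacobi_mult[OF L(2)] ju by simp
    ultimately show ?thesis unfolding f_def by simp
  qed
  ultimately have "(\<Sum>r\<in>{0..<L}. f r) = 0" by (simp add: sum_negf)
  thus ?thesis using za unfolding f_def by simp
qed



theorem corollary5:
  fixes R1 R2 :: int
  assumes "R1 > 1" and "odd R1"
    and "R2 > 1" and "odd R2" and "squarefree R2"
    and "coprime R1 R2"
  shows "\<forall>j k. 0 \<le> j \<and> j < R2 \<and> 0 \<le> k \<and> k < R1 \<longrightarrow>
    zak (\<lambda>n. of_int (jacobi n (R1 * R2))) R2 R1 j k =
      gauss_c R2 * of_int (jacobi R1 R2)
      * exp (- 2 * pi * \<i> * of_int (inv_mod R1 R2 * j * k) / of_int R2)
      * of_int (jacobi j R2) * of_int (jacobi k R1)"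
proof (intro allI impI)
  fix j k :: int
  define v where "v = inv_mod R1 R2"
  have v: "[R1 * v = 1] (mod R2)"
    unfolding v_def inv_mod_def using cong_solve_coprime_int[OF assms(6)] by (rule someI_ex)
  have R20: "R2 \<noteq> 0" "R2 > 0" using assms(3) by auto
  define f where "f b = of_int (jacobi b R2) * ee R2 (v * j*b)" for b :: int
  define E where "E = ee R2 (-(v * j*k))"
  have per: "f x = f (x mod R2)" for x
  proof -
    have c: "[x = x mod R2] (mod R2)" by (simp add: cong_def)
    have c2: "[v * j*x = v * j*(x mod R2)] (mod R2)" using cong_scalar_left[OF c] .
    show ?thesis unfolding f_def using jacobi_cong[OF c] ee_cong[OF R20(1) c2] by simp
  qed
  have trm: "of_int (jacobi (k + r*R1) (R1*R2)) * exp (2 * pi * \<i> * of_int (r * j) / of_int R2)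
      = of_int (jacobi k R1) * E * f (k + r*R1)" for r
  proof -
    have "jacobi (k + r*R1) (R1*R2) = jacobi (k + r*R1) R1 * jacobi (k + r*R1) R2"
      by (rule jacobi_modmult) (use assms in auto)
    moreover have "jacobi (k + r*R1) R1 = jacobi k R1"
      by (rule jacobi_cong) (simp add: cong_iff_dvd_diff)
    moreover have "exp (2 * pi * \<i> * of_int (r * j) / of_int R2) = E * ee R2 (v * j*(k + r*R1))"
    proof -
      have "[R1 * v * (j*r) = 1 * (j*r)] (mod R2)" using cong_scalar_right[OF v] .
      hence "[v * j*r*R1 = r*j] (mod R2)" by (simp add: ac_simps)
      hence "ee R2 (r*j) = ee R2 (v * j*r*R1)" using ee_cong[OF R20(1)] cong_sym by blast
      also have "v * j*r*R1 = -(v * j*k) + v * j*(k + r*R1)" by (simp add: algebra_simps)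
      finally show ?thesis unfolding E_def ee_add by (simp add: ee_def)
    qed
    ultimately show ?thesis unfolding f_def by simp
  qed
  have "zak (\<lambda>n. of_int (jacobi n (R1 * R2))) R2 R1 j k
      = (\<Sum>r\<in>{0..<R2}. of_int (jacobi k R1) * E * f (k + r*R1))"
    unfolding zak_def using trm by simp
  also have "\<dots> = of_int (jacobi k R1) * E * (\<Sum>r\<in>{0..<R2}. f (k + r*R1))"
    by (simp add: sum_distrib_left)
  also have "(\<Sum>r\<in>{0..<R2}. f (k + r*R1)) = (\<Sum>b\<in>{0..<R2}. f b)"
    using sum_reindex_affine[where L=R2 and u=R1 and k=k and f=f, OF R20(2) assms(6) per] .
  also have "\<dots> = of_int (jacobi (v * j) R2) * gauss_c R2"
    unfolding f_def gauss_c_def using gauss_sep[OF assms(3,4,5), of "v * j"] by (simp add: ee_def)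
  also have "jacobi (v * j) R2 = jacobi R1 R2 * jacobi j R2"
    using jacobi_mult[OF assms(4)] jacobi_unit_sq(2)[OF assms(4) v] by simp
  also have "E = exp (- 2 * pi * \<i> * of_int (inv_mod R1 R2 * j * k) / of_int R2)"
    unfolding E_def ee_def v_def by simp
  finally show "zak (\<lambda>n. of_int (jacobi n (R1 * R2))) R2 R1 j k =
      gauss_c R2 * of_int (jacobi R1 R2)
      * exp (- 2 * pi * \<i> * of_int (inv_mod R1 R2 * j * k) / of_int R2)
      * of_int (jacobi j R2) * of_int (jacobi k R1)" by (simp add: ac_simps)
qed


end
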